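(* Let $K$ be a finite field, $\kappa$ an infinite cardinal, $(R_\alpha\mid\alpha<\kappa)$ a sequence of $K$-algebras, $P=\prod_{\alpha<\kappa}R_\alpha$ and $I=\bigoplus_{\alpha<\kappa}R_\alpha\subseteq P$. Let $R$ be a subring of $P$ with $1_R=1_P$, containing $I$ as an ideal, such that there is a ring isomorphism $\varphi:R/I\cong K$. Then $R$ is a semidirect product of $I$ and $K$, i.e., there exist ring homomorphisms $\pi:R\to K$ surjective with $\mathrm{Ker}\,\pi=I$ and $\nu:K\to R$ with $\pi\nu=\mathrm{id}_K$.
   Context: Rings are unital and ring homomorphisms preserve units. *)

theory Defs
  imports "HOL-Algebra.Algebra"
begin

definition k_algebra ::
  "('k, 'a) ring_scheme \<Rightarrow> ('r, 'b) ring_scheme \<Rightarrow> ('k \<Rightarrow> 'r) \<Rightarrow> bool" where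
  "k_algebra K S f \<longleftrightarrow> ring S \<and> f \<in> ring_hom K S \<and>
     (\<forall>k\<in>carrier K. \<forall>x\<in>carrier S. f k \<otimes>\<^bsub>S\<^esub> x = x \<otimes>\<^bsub>S\<^esub> f k)"

definition prod_ring ::
  "'i set \<Rightarrow> ('i \<Rightarrow> ('r, 'b) ring_scheme) \<Rightarrow> ('i \<Rightarrow> 'r) ring" where
  "prod_ring A Rs =
     \<lparr> carrier = (\<Pi>\<^sub>E a\<in>A. carrier (Rs a)),
       Group.monoid.mult = (\<lambda>f g. \<lambda>a\<in>A. f a \<otimes>\<^bsub>Rs a\<^esub> g a),
       Group.monoid.one = (\<lambda>a\<in>A. \<one>\<^bsub>Rs a\<^esub>),
       Ring.ring.zero = (\<lambda>a\<in>A. \<zero>\<^bsub>Rs a\<^esub>),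
       Ring.ring.add = (\<lambda>f g. \<lambda>a\<in>A. f a \<oplus>\<^bsub>Rs a\<^esub> g a) \<rparr>"

definition dsum_set ::
  "'i set \<Rightarrow> ('i \<Rightarrow> ('r, 'b) ring_scheme) \<Rightarrow> ('i \<Rightarrow> 'r) set" where
  "dsum_set A Rs =
     {f \<in> (\<Pi>\<^sub>E a\<in>A. carrier (Rs a)). finite {a \<in> A. f a \<noteq> \<zero>\<^bsub>Rs a\<^esub>}}"

end

theory Submission
  imports Defs
begin

lemma quot_proj:
  assumes I: "ideal I R" and K: "ring K" and h: "h \<in> ring_iso (R Quot I) K"
  shows "h \<circ> (+>\<^bsub>R\<^esub>) I \<in> ring_hom R K"
    and "(h \<circ> (+>\<^bsub>R\<^esub>) I) ` carrier R = carrier K"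
    and "a_kernel R K (h \<circ> (+>\<^bsub>R\<^esub>) I) = I"
proof -
  interpret ideal I R by (rule I)
  have hh: "h \<in> ring_hom (R Quot I) K" and hb: "bij_betw h (carrier (R Quot I)) (carrier K)"
    using h by (auto simp: ring_iso_def)
  show "h \<circ> (+>\<^bsub>R\<^esub>) I \<in> ring_hom R K"
    using ring_hom_trans[OF rcos_ring_hom hh] .
  have cq: "carrier (R Quot I) = (+>\<^bsub>R\<^esub>) I ` carrier R"
    by (auto simp: FactRing_def A_RCOSETS_def')
  show "(h \<circ> (+>\<^bsub>R\<^esub>) I) ` carrier R = carrier K"
    using hb cq by (metis bij_betw_def image_comp)
  have hz: "h I = \<zero>\<^bsub>K\<^esub>"
    using ring_hom_zero[OF hh quotient_is_ring K] by (simp add: FactRing_def)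
  have Iq: "I \<in> carrier (R Quot I)"
    unfolding cq using a_rcos_zero[OF I additive_subgroup.zero_closed[OF is_additive_subgroup]] zero_closed by (metis image_eqI)
  have "x \<in> I" if "x \<in> carrier R" "h (I +>\<^bsub>R\<^esub> x) = \<zero>\<^bsub>K\<^esub>" for x
  proof -
    have "h (I +>\<^bsub>R\<^esub> x) = h I" using hz that by simp
    moreover have "I +>\<^bsub>R\<^esub> x \<in> carrier (R Quot I)" using cq that by blast
    ultimately have "I +>\<^bsub>R\<^esub> x = I"
      using hb Iq unfolding bij_betw_def inj_on_def by blast
    thus "x \<in> I" using rcos_const_imp_mem that by blast
  qed
  moreover have "x \<in> carrier R \<and> h (I +>\<^bsub>R\<^esub> x) = \<zero>\<^bsub>K\<^esub>" if "x \<in> I" for x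
    using a_rcos_zero[OF I that] hz that a_subset by auto
  ultimately show "a_kernel R K (h \<circ> (+>\<^bsub>R\<^esub>) I) = I"
    unfolding a_kernel_def' by auto
qed

theorem proposition4p7:
  fixes K :: "('k, 'c) ring_scheme"
    and A :: "'i set"
    and Rs :: "'i \<Rightarrow> ('r, 'b) ring_scheme"
    and fs :: "'i \<Rightarrow> 'k \<Rightarrow> 'r"
    and S :: "('i \<Rightarrow> 'r) set"
  assumes K_field: "field K" and K_finite: "finite (carrier K)"
    and A_inf: "infinite A"
    and algs: "\<And>a. a \<in> A \<Longrightarrow> k_algebra K (Rs a) (fs a)"
    and S_sub: "subring S (prod_ring A Rs)"
    and I_sub: "dsum_set A Rs \<subseteq> S"
    and I_ideal: "ideal (dsum_set A Rs) ((prod_ring A Rs)\<lparr>carrier := S\<rparr>)"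
    and iso: "((prod_ring A Rs)\<lparr>carrier := S\<rparr>) Quot (dsum_set A Rs) \<simeq> K"
  shows "\<exists>\<pi> \<nu>. \<pi> \<in> ring_hom ((prod_ring A Rs)\<lparr>carrier := S\<rparr>) K
             \<and> \<pi> ` S = carrier K
             \<and> a_kernel ((prod_ring A Rs)\<lparr>carrier := S\<rparr>) K \<pi> = dsum_set A Rs
             \<and> \<nu> \<in> ring_hom K ((prod_ring A Rs)\<lparr>carrier := S\<rparr>)
             \<and> (\<forall>k \<in> carrier K. \<pi> (\<nu> k) = k)"
proof -
  define R where "R = (prod_ring A Rs)\<lparr>carrier := S\<rparr>"
  define I where "I = dsum_set A Rs"
  have KR: "ring K" using K_field by (simp add: field_def domain_def cring_def)
  obtain h where h: "h \<in> ring_iso (R Quot I) K" using iso unfolding is_ring_iso_def R_def I_def by blast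
  define \<pi> where "\<pi> = h \<circ> (+>\<^bsub>R\<^esub>) I"
  have Iid: "ideal I R" using I_ideal by (simp add: R_def I_def)
  have ringR: "ring R" using Iid by (simp add: ideal_def)
  have cR: "carrier R = S" by (simp add: R_def)
  interpret RR: ring R by (rule ringR)
  interpret KK: ring K by (rule KR)
  have addS: "x \<oplus>\<^bsub>R\<^esub> y \<in> S" and mulS: "x \<otimes>\<^bsub>R\<^esub> y \<in> S" if "x \<in> S" "y \<in> S" for x y
    using that cR RR.add.m_closed RR.m_closed by auto
  have oneS: "\<one>\<^bsub>R\<^esub> \<in> S" using cR RR.one_closed by auto
  have pih: "\<pi> \<in> ring_hom R K" using quot_proj(1)[OF Iid KR h] by (simp add: \<pi>_def)
  have pis: "\<pi> ` S = carrier K" using quot_proj(2)[OF Iid KR h] by (simp add: \<pi>_def cR)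
  have pik: "a_kernel R K \<pi> = I" using quot_proj(3)[OF Iid KR h] by (simp add: \<pi>_def)
  have ringRs: "ring (Rs a)" and fsh: "fs a \<in> ring_hom K (Rs a)" if "a \<in> A" for a
    using algs[OF that] by (auto simp: k_algebra_def)
  have addR: "x \<oplus>\<^bsub>R\<^esub> y = (\<lambda>a\<in>A. x a \<oplus>\<^bsub>Rs a\<^esub> y a)" for x y by (simp add: R_def prod_ring_def)
  have mulR: "x \<otimes>\<^bsub>R\<^esub> y = (\<lambda>a\<in>A. x a \<otimes>\<^bsub>Rs a\<^esub> y a)" for x y by (simp add: R_def prod_ring_def)
  have oneR: "\<one>\<^bsub>R\<^esub> = (\<lambda>a\<in>A. \<one>\<^bsub>Rs a\<^esub>)" by (simp add: R_def prod_ring_def)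
  have SPi: "S \<subseteq> (\<Pi>\<^sub>E a\<in>A. carrier (Rs a))"
    using submonoid.subset[OF subring.axioms(2)[OF S_sub]] by (simp add: prod_ring_def)
  have kerI: "x \<in> I \<longleftrightarrow> x \<in> S \<and> \<pi> x = \<zero>\<^bsub>K\<^esub>" for x
    using pik by (auto simp: a_kernel_def' cR)
  have D: "finite {a \<in> A. x a \<noteq> y a}" if x: "x \<in> S" and y: "y \<in> S" and e: "\<pi> x = \<pi> y" for x y
  proof -
    define z where "z = x \<ominus>\<^bsub>R\<^esub> y"
    have zS: "z \<in> S" using x y RR.minus_closed by (simp add: z_def cR)
    have zy: "z \<oplus>\<^bsub>R\<^esub> y = x" using x y unfolding z_def cR[symmetric]
      by (simp add: a_minus_def RR.a_assoc RR.l_neg)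
    have "\<pi> z \<oplus>\<^bsub>K\<^esub> \<pi> y = \<zero>\<^bsub>K\<^esub> \<oplus>\<^bsub>K\<^esub> \<pi> y"
      using ring_hom_add[OF pih, of z y] zS y zy e ring_hom_closed[OF pih, of y]
      by (simp add: cR)
    hence "\<pi> z = \<zero>\<^bsub>K\<^esub>"
      using ring_hom_closed[OF pih, of y] ring_hom_closed[OF pih, of z] zS y
      by (metis cR KK.add.r_cancel KK.zero_closed)
    hence "z \<in> I" using kerI zS by simp
    hence fz: "finite {a \<in> A. z a \<noteq> \<zero>\<^bsub>Rs a\<^esub>}" by (simp add: I_def dsum_set_def)
    have "{a \<in> A. x a \<noteq> y a} \<subseteq> {a \<in> A. z a \<noteq> \<zero>\<^bsub>Rs a\<^esub>}"
    proof (rule subsetI, rule ccontr)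
      fix a assume a0: "a \<in> {a \<in> A. x a \<noteq> y a}" and a1: "a \<notin> {a \<in> A. z a \<noteq> \<zero>\<^bsub>Rs a\<^esub>}"
      have a: "a \<in> A" "x a \<noteq> y a" "z a = \<zero>\<^bsub>Rs a\<^esub>" using a0 a1 by auto
      interpret Ra: ring "Rs a" by (rule ringRs[OF a(1)])
      have "x a = (z \<oplus>\<^bsub>R\<^esub> y) a" using zy by simp
      also have "\<dots> = z a \<oplus>\<^bsub>Rs a\<^esub> y a" using a(1) by (simp add: addR)
      also have "\<dots> = y a" proof -
        have "y a \<in> carrier (Rs a)" using y SPi a(1) by blast
        thus ?thesis using a(3) by simp
      qed
      finally show False using a(2) by simp
    qed
    thus ?thesis using fz finite_subset by blast
  qed
  have E: "x \<oplus>\<^bsub>R\<^esub> d \<in> S \<and> \<pi> (x \<oplus>\<^bsub>R\<^esub> d) = \<pi> x" if x: "x \<in> S" and d: "d \<in> I" for x d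
  proof -
    have dS: "d \<in> S" using d I_sub unfolding I_def by blast
    have "\<pi> d = \<zero>\<^bsub>K\<^esub>" using kerI d by simp
    thus ?thesis using x dS ring_hom_add[OF pih, of x d] ring_hom_closed[OF pih, of x] RR.add.m_closed
      by (simp add: cR)
  qed
  define xk where "xk k = (SOME x. x \<in> S \<and> \<pi> x = k)" for k
  have xk: "xk k \<in> S \<and> \<pi> (xk k) = k" if "k \<in> carrier K" for k
  proof -
    have "\<exists>x. x \<in> S \<and> \<pi> x = k" using pis that by force
    thus ?thesis unfolding xk_def by (rule someI_ex)
  qed
  define F where "F = (\<Union>k\<in>carrier K. \<Union>l\<in>carrier K.
      {a \<in> A. xk (k \<oplus>\<^bsub>K\<^esub> l) a \<noteq> (xk k \<oplus>\<^bsub>R\<^esub> xk l) a} \<union>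
      {a \<in> A. xk (k \<otimes>\<^bsub>K\<^esub> l) a \<noteq> (xk k \<otimes>\<^bsub>R\<^esub> xk l) a}) \<union>
      {a \<in> A. xk \<one>\<^bsub>K\<^esub> a \<noteq> \<one>\<^bsub>R\<^esub> a}"
  have FA: "F \<subseteq> A" unfolding F_def by blast
  have finF: "finite F"
  proof -
    have "finite {a \<in> A. xk (k \<oplus>\<^bsub>K\<^esub> l) a \<noteq> (xk k \<oplus>\<^bsub>R\<^esub> xk l) a}"
      if "k \<in> carrier K" "l \<in> carrier K" for k l
      using that xk[of k] xk[of l] xk[of "k \<oplus>\<^bsub>K\<^esub> l"] ring_hom_add[OF pih, of "xk k" "xk l"]
      by (intro D) (auto simp: cR addS mulS oneS)
    moreover have "finite {a \<in> A. xk (k \<otimes>\<^bsub>K\<^esub> l) a \<noteq> (xk k \<otimes>\<^bsub>R\<^esub> xk l) a}"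
      if "k \<in> carrier K" "l \<in> carrier K" for k l
      using that xk[of k] xk[of l] xk[of "k \<otimes>\<^bsub>K\<^esub> l"] ring_hom_mult[OF pih, of "xk k" "xk l"]
      by (intro D) (auto simp: cR addS mulS oneS)
    moreover have "finite {a \<in> A. xk \<one>\<^bsub>K\<^esub> a \<noteq> \<one>\<^bsub>R\<^esub> a}"
      using xk[of "\<one>\<^bsub>K\<^esub>"] ring_hom_one[OF pih] RR.one_closed
      by (intro D) (auto simp: cR addS mulS oneS)
    ultimately show ?thesis unfolding F_def using K_finite by auto
  qed
  define \<nu> where "\<nu> k = (\<lambda>a\<in>A. if a \<in> F then fs a k else xk k a)" for k
  define d where "d k = (\<lambda>a\<in>A. if a \<in> F then fs a k \<ominus>\<^bsub>Rs a\<^esub> xk k a else \<zero>\<^bsub>Rs a\<^esub>)" for k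
  have xkc: "xk k a \<in> carrier (Rs a)" if "k \<in> carrier K" "a \<in> A" for k a
    using xk[OF that(1)] SPi that(2) by blast
  have fsc: "fs a k \<in> carrier (Rs a)" if "k \<in> carrier K" "a \<in> A" for k a
    using ring_hom_closed[OF fsh[OF that(2)] that(1)] .
  have dI: "d k \<in> I" if k: "k \<in> carrier K" for k
  proof -
    have "d k \<in> (\<Pi>\<^sub>E a\<in>A. carrier (Rs a))"
    proof (rule PiE_I)
      fix a assume a: "a \<in> A"
      interpret Ra: ring "Rs a" by (rule ringRs[OF a])
      show "d k a \<in> carrier (Rs a)" using xkc[OF k a] fsc[OF k a] a by (simp add: d_def)
    qed (simp add: d_def)
    moreover have "{a \<in> A. d k a \<noteq> \<zero>\<^bsub>Rs a\<^esub>} \<subseteq> F" by (auto simp: d_def)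
    ultimately show ?thesis using finF finite_subset by (auto simp: I_def dsum_set_def)
  qed
  have nud: "\<nu> k = xk k \<oplus>\<^bsub>R\<^esub> d k" if k: "k \<in> carrier K" for k
  proof
    fix a show "\<nu> k a = (xk k \<oplus>\<^bsub>R\<^esub> d k) a"
    proof (cases "a \<in> A")
      case True
      interpret Ra: ring "Rs a" by (rule ringRs[OF True])
      show ?thesis using xkc[OF k True] fsc[OF k True] True
        by (simp add: \<nu>_def d_def addR a_minus_def Ra.add.m_lcomm Ra.r_neg)
    qed (simp add: \<nu>_def addR)
  qed
  have nuS: "\<nu> k \<in> S" and pinu: "\<pi> (\<nu> k) = k" if k: "k \<in> carrier K" for k
    using E[OF conjunct1[OF xk[OF k]] dI[OF k]] xk[OF k] nud[OF k] by auto
  have nuh: "\<nu> \<in> ring_hom K R"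
  proof (rule ring_hom_memI)
    fix k assume "k \<in> carrier K" thus "\<nu> k \<in> carrier R" using nuS cR by simp
  next
    fix k l assume k: "k \<in> carrier K" and l: "l \<in> carrier K"
    show "\<nu> (k \<otimes>\<^bsub>K\<^esub> l) = \<nu> k \<otimes>\<^bsub>R\<^esub> \<nu> l"
    proof
      fix a show "\<nu> (k \<otimes>\<^bsub>K\<^esub> l) a = (\<nu> k \<otimes>\<^bsub>R\<^esub> \<nu> l) a"
      proof (cases "a \<in> A")
        case True
        show ?thesis
        proof (cases "a \<in> F")
          case True2: True
          show ?thesis using True True2 ring_hom_mult[OF fsh[OF True] k l]
            by (simp add: \<nu>_def mulR)
        next
          case False
          have "xk (k \<otimes>\<^bsub>K\<^esub> l) a = (xk k \<otimes>\<^bsub>R\<^esub> xk l) a"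
            using False True k l unfolding F_def by blast
          thus ?thesis using True False by (simp add: \<nu>_def mulR)
        qed
      qed (simp add: \<nu>_def mulR)
    qed
    show "\<nu> (k \<oplus>\<^bsub>K\<^esub> l) = \<nu> k \<oplus>\<^bsub>R\<^esub> \<nu> l"
    proof
      fix a show "\<nu> (k \<oplus>\<^bsub>K\<^esub> l) a = (\<nu> k \<oplus>\<^bsub>R\<^esub> \<nu> l) a"
      proof (cases "a \<in> A")
        case True
        show ?thesis
        proof (cases "a \<in> F")
          case True2: True
          show ?thesis using True True2 ring_hom_add[OF fsh[OF True] k l]
            by (simp add: \<nu>_def addR)
        next
          case False
          have "xk (k \<oplus>\<^bsub>K\<^esub> l) a = (xk k \<oplus>\<^bsub>R\<^esub> xk l) a"
            using False True k l unfolding F_def by blast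
          thus ?thesis using True False by (simp add: \<nu>_def addR)
        qed
      qed (simp add: \<nu>_def addR)
    qed
  next
    show "\<nu> \<one>\<^bsub>K\<^esub> = \<one>\<^bsub>R\<^esub>"
    proof
      fix a show "\<nu> \<one>\<^bsub>K\<^esub> a = \<one>\<^bsub>R\<^esub> a"
      proof (cases "a \<in> A")
        case True
        show ?thesis
        proof (cases "a \<in> F")
          case True2: True
          show ?thesis using True True2 ring_hom_one[OF fsh[OF True]]
            by (simp add: \<nu>_def oneR)
        next
          case False
          have "xk \<one>\<^bsub>K\<^esub> a = \<one>\<^bsub>R\<^esub> a"
            using False True unfolding F_def by blast
          thus ?thesis using True False by (simp add: \<nu>_def)
        qed
      qed (simp add: \<nu>_def oneR)
    qed
  qed
  show ?thesis
    using pih pis pik nuh pinu unfolding R_def I_def by blast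
qed
end
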